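(* Let $(p_k)_{k\in\mathbb Z}$ be a probability density on $\mathbb Z$ with $p_k=p_{-k}$, $p_{k+1}\le p_k$ for $k\ge0$, and $\sum_kk^2p_k\in(0,\infty)$; let $Q_o$ be the product probability on $\mathbb Z^{\mathbb N}$ of sequences $\xi=(\xi_n)_{n\ge1}$ of i.i.d. variables with density $(p_k)$, with left shift $\sigma_\xi$. Let $P_o$ be the product measure on $(\mathbb R^+)^{\mathbb Z}$ of i.i.d. positive random variables $(\zeta_j)_{j\in\mathbb Z}$ with finite mean, with left shift $\sigma_\zeta$. Let $\Sigma:=\mathbb Z^{\mathbb N}\times(\mathbb R^+)^{\mathbb Z}$, $\nu:=Q_o\otimes P_o$, $T(\xi,\zeta):=(\sigma_\xi(\xi),\sigma_\zeta^{\xi_1}(\zeta))$. Then every $T$-invariant set $A\subseteq\Sigma$ is of the form $A=\mathbb Z^{\mathbb N}\times C$ mod $\nu$, where $C$ is a measurable subset of $(\mathbb R^+)^{\mathbb Z}$.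
   Context: $\sigma_\zeta^k$ is the $k$-th iterate of the invertible shift $\sigma_\zeta$, $k\in\mathbb Z$. "mod $\nu$" means up to a $\nu$-null set. *)

theory Defs
  imports "HOL-Probability.Probability"
begin

text \<open>Left shift on sequences indexed by nat (index 0 stands for the paper's index 1).\<close>
definition shift_xi :: "(nat \<Rightarrow> int) \<Rightarrow> (nat \<Rightarrow> int)" where
  "shift_xi \<xi> = (\<lambda>n. \<xi> (Suc n))"

definition shift_zeta_pow :: "int \<Rightarrow> (int \<Rightarrow> real) \<Rightarrow> (int \<Rightarrow> real)" where
  "shift_zeta_pow k \<zeta> = (\<lambda>j. \<zeta> (j + k))"

definition skewT :: "(nat \<Rightarrow> int) \<times> (int \<Rightarrow> real) \<Rightarrow> (nat \<Rightarrow> int) \<times> (int \<Rightarrow> real)" where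
  "skewT x = (shift_xi (fst x), shift_zeta_pow (fst x 0) (snd x))"

end

theory Submission
  imports Defs
begin

lemma cyl_approx:
  fixes M :: "'a measure"
  assumes Mp: "prob_space M" and A: "A \<in> sets (PiM (UNIV::nat set) (\<lambda>_. M))" and e: "e > 0"
  shows "\<exists>n X. X \<in> sets (PiM {..<n} (\<lambda>_. M)) \<and>
     measure (PiM (UNIV::nat set) (\<lambda>_. M)) ((A - prod_emb UNIV (\<lambda>_. M) {..<n} X) \<union> (prod_emb UNIV (\<lambda>_. M) {..<n} X - A)) < e"
proof -
  define Q where "Q = PiM (UNIV::nat set) (\<lambda>_. M)"
  define G where "G = {prod_emb UNIV (\<lambda>_. M) {..<n} X | n X. X \<in> sets (PiM {..<n} (\<lambda>_::nat. M))}"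
  interpret Q: prob_space Q unfolding Q_def by (rule prob_space_PiM) (use Mp in auto)
  have lift: "prod_emb UNIV (\<lambda>_. M) {..<n} X = prod_emb UNIV (\<lambda>_. M) {..<k} (prod_emb {..<k} (\<lambda>_. M) {..<n} X) \<and> prod_emb {..<k} (\<lambda>_. M) {..<n} X \<in> sets (PiM {..<k} (\<lambda>_. M))"
    if "n \<le> k" "X \<in> sets (PiM {..<n} (\<lambda>_. M))" for n k :: nat and X
  proof -
    have s: "{..<n} \<subseteq> {..<k}" using that by auto
    show ?thesis using prod_emb_trans[OF s subset_UNIV, of "\<lambda>_. M" X] s that
      by (auto intro!: measurable_prod_emb)
  qed
  have Gsub: "G \<subseteq> sets Q" by (auto simp: G_def Q_def intro!: measurable_prod_emb)
  have Gun: "a \<union> b \<in> G" "a \<inter> b \<in> G" if "a \<in> G" "b \<in> G" for a b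
  proof -
    obtain n X where a: "a = prod_emb UNIV (\<lambda>_. M) {..<n} X" "X \<in> sets (PiM {..<n} (\<lambda>_. M))"
      using \<open>a \<in> G\<close> by (auto simp: G_def)
    obtain m Y where b: "b = prod_emb UNIV (\<lambda>_. M) {..<m} Y" "Y \<in> sets (PiM {..<m} (\<lambda>_. M))"
      using \<open>b \<in> G\<close> by (auto simp: G_def)
    define k where "k = max n m"
    have 1: "a = prod_emb UNIV (\<lambda>_. M) {..<k} (prod_emb {..<k} (\<lambda>_. M) {..<n} X)"
      "prod_emb {..<k} (\<lambda>_. M) {..<n} X \<in> sets (PiM {..<k} (\<lambda>_. M))"
      using lift[of n k X] a by (auto simp: k_def)
    have 2: "b = prod_emb UNIV (\<lambda>_. M) {..<k} (prod_emb {..<k} (\<lambda>_. M) {..<m} Y)"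
      "prod_emb {..<k} (\<lambda>_. M) {..<m} Y \<in> sets (PiM {..<k} (\<lambda>_. M))"
      using lift[of m k Y] b by (auto simp: k_def)
    show "a \<union> b \<in> G" unfolding G_def
      by (rule CollectI, rule exI[of _ k], rule exI[of _ "prod_emb {..<k} (\<lambda>_. M) {..<n} X \<union> prod_emb {..<k} (\<lambda>_. M) {..<m} Y"])
        (use 1 2 in auto)
    show "a \<inter> b \<in> G" unfolding G_def
      by (rule CollectI, rule exI[of _ k], rule exI[of _ "prod_emb {..<k} (\<lambda>_. M) {..<n} X \<inter> prod_emb {..<k} (\<lambda>_. M) {..<m} Y"])
        (use 1 2 in \<open>auto simp: prod_emb_Int\<close>)
  qed
  have Gempty: "{} \<in> G" unfolding G_def
    by (rule CollectI, rule exI[of _ 0], rule exI[of _ "{}"]) auto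
  have Gcompl: "space Q - a \<in> G" if "a \<in> G" for a
  proof -
    obtain n X where a: "a = prod_emb UNIV (\<lambda>_. M) {..<n} X" "X \<in> sets (PiM {..<n} (\<lambda>_. M))"
      using \<open>a \<in> G\<close> by (auto simp: G_def)
    have "space Q = prod_emb UNIV (\<lambda>_. M) {..<n} (space (PiM {..<n} (\<lambda>_. M)))"
      by (auto simp: Q_def prod_emb_def space_PiM PiE_iff)
    then have "space Q - a = prod_emb UNIV (\<lambda>_. M) {..<n} (space (PiM {..<n} (\<lambda>_. M)) - X)"
      using a by simp
    then show ?thesis unfolding G_def using a by blast
  qed
  have Gfin: "(\<Union>i<N. B i) \<in> G" if "\<forall>i<N. B i \<in> G" for N :: nat and B
    using that proof (induction N)
    case 0 then show ?case using Gempty by simp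
  next
    case (Suc N) then show ?case by (simp add: lessThan_Suc Gun)
  qed
  have Gpow: "G \<subseteq> Pow (space Q)" using Gsub sets.sets_into_space by auto
  have Gstable: "Int_stable G" using Gun by (auto simp: Int_stable_def)
  have sets_sub: "sets Q \<subseteq> sigma_sets (space Q) G"
  proof -
    have "prod_algebra UNIV (\<lambda>_. M) \<subseteq> G"
    proof
      fix x assume "x \<in> prod_algebra UNIV (\<lambda>_::nat. M)"
      then obtain J E where J: "finite J" and x: "x = prod_emb UNIV (\<lambda>_. M) J (Pi\<^sub>E J E)"
        and E: "\<And>i. i \<in> J \<Longrightarrow> E i \<in> sets M"
        by (auto elim!: prod_algebraE)
      obtain n where n: "J \<subseteq> {..<n}" using J finite_nat_bounded by blast
      have "x = prod_emb UNIV (\<lambda>_. M) {..<n} (prod_emb {..<n} (\<lambda>_. M) J (Pi\<^sub>E J E))"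
        using n x by simp
      moreover have "prod_emb {..<n} (\<lambda>_. M) J (Pi\<^sub>E J E) \<in> sets (PiM {..<n} (\<lambda>_. M))"
        using n J E by (intro measurable_prod_emb sets_PiM_I_finite) auto
      ultimately show "x \<in> G" unfolding G_def by blast
    qed
    then show ?thesis
      unfolding Q_def sets_PiM space_PiM[symmetric] by (rule sigma_sets_mono')
  qed
  define P where "P A \<longleftrightarrow> (\<forall>e>0. \<exists>B\<in>G. Q.prob ((A - B) \<union> (B - A)) < e)" for A
  have "P A" using Gstable Gpow sets_sub[THEN subsetD, OF A[folded Q_def]]
  proof (induction rule: sigma_sets_induct_disjoint)
    case (basic A) then show ?case unfolding P_def by (intro allI impI bexI[of _ A]) auto
  next
    case empty then show ?case unfolding P_def using Gempty by (intro allI impI bexI[of _ "{}"]) auto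
  next
    case (compl A)
    show ?case unfolding P_def
    proof (intro allI impI)
      fix e :: real assume "e > 0"
      with compl obtain B where B: "B \<in> G" "Q.prob ((A - B) \<union> (B - A)) < e" unfolding P_def by blast
      have "A \<subseteq> space Q" using compl(1) sigma_sets_into_sp[OF Gpow] by blast
      moreover have "B \<subseteq> space Q" using B Gpow by auto
      ultimately have "((space Q - A) - (space Q - B)) \<union> ((space Q - B) - (space Q - A)) = (A - B) \<union> (B - A)"
        by blast
      then show "\<exists>B\<in>G. Q.prob (((space Q - A) - B) \<union> (B - (space Q - A))) < e"
        using B Gcompl by (intro bexI[of _ "space Q - B"]) auto
    qed
  next
    case (union A)
    have As: "A i \<in> sets Q" for i using union(2) sets.sigma_sets_subset[OF Gsub] by auto
    show ?case unfolding P_def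
    proof (intro allI impI)
      fix e :: real assume e: "e > 0"
      define U where "U N = (\<Union>i<N. A i)" for N
      have Us: "U N \<in> sets Q" for N using As by (auto simp: U_def)
      have "incseq U" unfolding U_def incseq_def by (auto intro: less_le_trans)
      moreover have "(\<Union>N. U N) = (\<Union>i. A i)" by (auto simp: U_def)
      ultimately have "(\<lambda>N. Q.prob (U N)) \<longlonglongrightarrow> Q.prob (\<Union>i. A i)"
        using Q.finite_Lim_measure_incseq[of U] Us by auto
      then obtain N where N: "dist (Q.prob (U N)) (Q.prob (\<Union>i. A i)) < e/2"
        using e by (metis half_gt_zero lim_sequentially order_refl)
      have UA: "Q.prob ((\<Union>i. A i) - U N) < e/2"
      proof -
        have "U N \<subseteq> (\<Union>i. A i)" by (auto simp: U_def)
        then have "Q.prob ((\<Union>i. A i) - U N) = Q.prob (\<Union>i. A i) - Q.prob (U N)"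
          using As Us by (intro Q.finite_measure_Diff) auto
        then show ?thesis using N by (simp add: dist_real_def abs_if split: if_splits)
      qed
      define d where "d = e / (2 * (real N + 1))"
      have d: "d > 0" using e by (simp add: d_def)
      have "\<forall>i. \<exists>B\<in>G. Q.prob ((A i - B) \<union> (B - A i)) < d" using union(3) d unfolding P_def by blast
      then obtain B where B: "\<And>i. B i \<in> G" "\<And>i. Q.prob ((A i - B i) \<union> (B i - A i)) < d"
        by metis
      have Bs: "B i \<in> sets Q" for i using B Gsub by auto
      let ?B = "\<Union>i<N. B i"
      have sub: "((\<Union>i. A i) - ?B) \<union> (?B - (\<Union>i. A i)) \<subseteq> ((\<Union>i. A i) - U N) \<union> (\<Union>i<N. (A i - B i) \<union> (B i - A i))"
        by (auto simp: U_def)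
      have "Q.prob (((\<Union>i. A i) - ?B) \<union> (?B - (\<Union>i. A i))) \<le> Q.prob (((\<Union>i. A i) - U N) \<union> (\<Union>i<N. (A i - B i) \<union> (B i - A i)))"
        using As Bs Us by (intro Q.finite_measure_mono[OF sub]) auto
      also have "\<dots> \<le> Q.prob ((\<Union>i. A i) - U N) + Q.prob (\<Union>i<N. (A i - B i) \<union> (B i - A i))"
        using As Bs Us by (intro measure_Un_le) auto
      also have "Q.prob (\<Union>i<N. (A i - B i) \<union> (B i - A i)) \<le> (\<Sum>i<N. Q.prob ((A i - B i) \<union> (B i - A i)))"
        using As Bs by (intro measure_UNION_le) auto
      also have "\<dots> \<le> (\<Sum>i<N. d)" using B(2) by (intro sum_mono) (simp add: less_imp_le)
      also have "\<dots> = real N * d" by simp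
      also have "real N * d < e / 2"
        using e by (simp add: d_def field_simps)
      finally have "Q.prob (((\<Union>i. A i) - ?B) \<union> (?B - (\<Union>i. A i))) < e" using UA by linarith
      moreover have "?B \<in> G" using B Gfin by auto
      ultimately show "\<exists>B\<in>G. Q.prob (((\<Union>i. A i) - B) \<union> (B - (\<Union>i. A i))) < e" by blast
    qed
  qed
  then obtain B where "B \<in> G" "Q.prob ((A - B) \<union> (B - A)) < e" using e unfolding P_def by blast
  then show ?thesis unfolding G_def Q_def by blast
qed

definition swp :: "nat \<Rightarrow> nat \<Rightarrow> nat" where
  "swp n i = (if i < n then i + n else if i < 2*n then i - n else i)"

lemma swp_swp[simp]: "swp n (swp n i) = i"
  by (auto simp: swp_def)

lemma inj_swp: "inj (swp n)"
  by (metis injI swp_swp)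

lemma measure_sd_le:
  assumes fm: "finite_measure M" and A: "A \<in> sets M" and B: "B \<in> sets M"
  shows "measure M A \<le> measure M B + measure M ((A - B) \<union> (B - A))"
proof -
  have "A \<subseteq> B \<union> ((A - B) \<union> (B - A))" by blast
  then have "measure M A \<le> measure M (B \<union> ((A - B) \<union> (B - A)))"
    using A B by (intro finite_measure.finite_measure_mono[OF fm]) auto
  also have "\<dots> \<le> measure M B + measure M ((A - B) \<union> (B - A))"
    using A B by (intro measure_Un_le) auto
  finally show ?thesis .
qed

lemma coord_indep:
  fixes M :: "'a measure"
  assumes Mp: "prob_space M"
  shows "prob_space.indep_vars (PiM (UNIV::nat set) (\<lambda>_. M)) (\<lambda>_. M) (\<lambda>i \<omega>. \<omega> i) UNIV"
proof -
  interpret Q: prob_space "PiM (UNIV::nat set) (\<lambda>_. M)" by (rule prob_space_PiM) (use Mp in auto)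
  have rv: "Q.random_variable M (\<lambda>\<omega>. \<omega> i)" for i by (rule measurable_component_singleton) auto
  have "distr (PiM (UNIV::nat set) (\<lambda>_. M)) M (\<lambda>\<omega>. \<omega> i) = M" for i
    using distr_PiM_component[of UNIV "\<lambda>_. M" i] Mp by auto
  moreover have "(\<lambda>x. \<lambda>i\<in>UNIV. x i) = (\<lambda>x::nat \<Rightarrow> 'a. x)" by (simp add: restrict_def)
  ultimately show ?thesis
    by (subst Q.indep_vars_iff_distr_eq_PiM) (auto simp: rv)
qed

lemma hewitt_savage:
  fixes M :: "'a measure"
  assumes Mp: "prob_space M" and A: "A \<in> sets (PiM (UNIV::nat set) (\<lambda>_. M))"
   and inv: "\<And>n \<xi>. \<xi> \<in> space (PiM (UNIV::nat set) (\<lambda>_. M)) \<Longrightarrow> (\<xi> \<circ> swp n \<in> A \<longleftrightarrow> \<xi> \<in> A)"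
  shows "measure (PiM (UNIV::nat set) (\<lambda>_. M)) A = 0 \<or> measure (PiM (UNIV::nat set) (\<lambda>_. M)) A = 1"
proof -
  define Q where "Q = PiM (UNIV::nat set) (\<lambda>_. M)"
  interpret Q: prob_space Q unfolding Q_def by (rule prob_space_PiM) (use Mp in auto)
  have AQ: "A \<in> sets Q" using A by (simp add: Q_def)
  have key: "\<bar>Q.prob A - Q.prob A ^ 2\<bar> \<le> 4 * e" if e: "e > 0" for e
  proof -
    obtain n X where X: "X \<in> sets (PiM {..<n} (\<lambda>_. M))"
      and appr: "Q.prob ((A - prod_emb UNIV (\<lambda>_. M) {..<n} X) \<union> (prod_emb UNIV (\<lambda>_. M) {..<n} X - A)) < e"
      using cyl_approx[OF Mp A e] unfolding Q_def by blast
    define B where "B = prod_emb UNIV (\<lambda>_. M) {..<n} X"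
    have BQ: "B \<in> sets Q" unfolding B_def Q_def using X by (auto intro!: measurable_prod_emb)
    define f where "f = (\<lambda>\<omega>::nat \<Rightarrow> 'a. \<lambda>i. \<omega> (swp n i))"
    have fm: "f \<in> measurable Q Q" unfolding f_def Q_def
      by (intro measurable_PiM_single') (auto simp: space_PiM)
    have fd: "distr Q Q f = Q"
    proof -
      have "distr Q (PiM UNIV (\<lambda>i. M)) (\<lambda>\<omega>. \<lambda>i\<in>UNIV. \<omega> (swp n i)) = PiM UNIV (\<lambda>i. M)"
        unfolding Q_def by (rule distr_PiM_reindex) (use Mp inj_swp in auto)
      then show ?thesis by (simp add: f_def Q_def restrict_def)
    qed
    have fsp: "f \<omega> \<in> space Q" if "\<omega> \<in> space Q" for \<omega> using fm that by (rule measurable_space)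
    define B' where "B' = f -` B \<inter> space Q"
    have B'Q: "B' \<in> sets Q" unfolding B'_def using fm BQ by (rule measurable_sets)
    have pB': "Q.prob B' = Q.prob B"
      using measure_distr[OF fm BQ] fd by (simp add: B'_def)
    have Ainv: "f -` A \<inter> space Q = A"
      using inv sets.sets_into_space[OF AQ] fsp by (auto simp: f_def o_def Q_def)
    have sdeq: "(A - B') \<union> (B' - A) = f -` ((A - B) \<union> (B - A)) \<inter> space Q"
      using Ainv unfolding B'_def by blast
    have sdQ: "(A - B) \<union> (B - A) \<in> sets Q" using AQ BQ by auto
    have p1: "Q.prob ((A - B') \<union> (B' - A)) < e"
      using measure_distr[OF fm sdQ] fd appr sdeq by (simp add: B_def)
    have p0: "Q.prob ((A - B) \<union> (B - A)) < e" using appr by (simp add: B_def)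
    define h where "h = (\<lambda>y::nat \<Rightarrow> 'a. \<lambda>i\<in>{..<n}. y (i + n))"
    have hm: "h \<in> measurable (PiM {n..<2*n} (\<lambda>_. M)) (PiM {..<n} (\<lambda>_. M))"
      unfolding h_def by (intro measurable_restrict measurable_component_singleton) auto
    have ind0: "Q.indep_var (PiM {..<n} (\<lambda>_. M)) (\<lambda>\<omega>. restrict (\<lambda>i. \<omega> i) {..<n})
        (PiM {n..<2*n} (\<lambda>_. M)) (\<lambda>\<omega>. restrict (\<lambda>i. \<omega> i) {n..<2*n})"
      by (rule Q.indep_var_restrict[OF coord_indep[OF Mp, folded Q_def]]) auto
    have ind: "Q.indep_var (PiM {..<n} (\<lambda>_. M)) ((\<lambda>x. x) \<circ> (\<lambda>\<omega>. restrict (\<lambda>i. \<omega> i) {..<n}))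
        (PiM {..<n} (\<lambda>_. M)) (h \<circ> (\<lambda>\<omega>. restrict (\<lambda>i. \<omega> i) {n..<2*n}))"
      by (rule Q.indep_var_compose[OF ind0 _ hm]) simp
    have "Q.prob ((\<lambda>x. (((\<lambda>x. x) \<circ> (\<lambda>\<omega>. restrict (\<lambda>i. \<omega> i) {..<n})) x, (h \<circ> (\<lambda>\<omega>. restrict (\<lambda>i. \<omega> i) {n..<2*n})) x)) -` (X \<times> X) \<inter> space Q) =
      Q.prob (((\<lambda>x. x) \<circ> (\<lambda>\<omega>. restrict (\<lambda>i. \<omega> i) {..<n})) -` X \<inter> space Q) * Q.prob ((h \<circ> (\<lambda>\<omega>. restrict (\<lambda>i. \<omega> i) {n..<2*n})) -` X \<inter> space Q)"
      by (rule Q.indep_varD[OF ind X X])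
    moreover have "((\<lambda>x. x) \<circ> (\<lambda>\<omega>. restrict (\<lambda>i. \<omega> i) {..<n})) -` X \<inter> space Q = B"
      by (auto simp: B_def prod_emb_def Q_def space_PiM)
    moreover have hB: "(h \<circ> (\<lambda>\<omega>. restrict (\<lambda>i. \<omega> i) {n..<2*n})) -` X \<inter> space Q = B'"
    proof -
      have "h (restrict \<omega> {n..<2*n}) = restrict (f \<omega>) {..<n}" for \<omega>
        by (auto simp: h_def f_def swp_def fun_eq_iff)
      then show ?thesis using fsp by (auto simp: B'_def B_def prod_emb_def Q_def space_PiM)
    qed
    moreover have "(\<lambda>x. (((\<lambda>x. x) \<circ> (\<lambda>\<omega>. restrict (\<lambda>i. \<omega> i) {..<n})) x, (h \<circ> (\<lambda>\<omega>. restrict (\<lambda>i. \<omega> i) {n..<2*n})) x)) -` (X \<times> X) \<inter> space Q = B \<inter> B'"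
      using calculation(2,3) by blast
    ultimately have pBB: "Q.prob (B \<inter> B') = Q.prob B * Q.prob B" using pB' by simp
    have sub: "(A - B \<inter> B') \<union> (B \<inter> B' - A) \<subseteq> ((A - B) \<union> (B - A)) \<union> ((A - B') \<union> (B' - A))" by blast
    have "Q.prob ((A - B \<inter> B') \<union> (B \<inter> B' - A)) \<le> Q.prob (((A - B) \<union> (B - A)) \<union> ((A - B') \<union> (B' - A)))"
      using AQ BQ B'Q by (intro Q.finite_measure_mono[OF sub]) auto
    also have "\<dots> \<le> Q.prob ((A - B) \<union> (B - A)) + Q.prob ((A - B') \<union> (B' - A))"
      using AQ BQ B'Q by (intro measure_Un_le) auto
    finally have p2: "Q.prob ((A - B \<inter> B') \<union> (B \<inter> B' - A)) < 2 * e" using p0 p1 by linarith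
    have d1: "\<bar>Q.prob A - Q.prob B\<bar> \<le> Q.prob ((A - B) \<union> (B - A))"
    proof -
      have "Q.prob A \<le> Q.prob B + Q.prob ((A - B) \<union> (B - A))"
        using measure_sd_le[OF Q.finite_measure_axioms AQ BQ] .
      moreover have "Q.prob B \<le> Q.prob A + Q.prob ((A - B) \<union> (B - A))"
        using measure_sd_le[OF Q.finite_measure_axioms BQ AQ] by (simp add: Un_commute)
      ultimately show ?thesis by linarith
    qed
    have d2: "\<bar>Q.prob A - Q.prob (B \<inter> B')\<bar> \<le> Q.prob ((A - B \<inter> B') \<union> (B \<inter> B' - A))"
    proof -
      let ?C = "B \<inter> B'"
      have CQ: "?C \<in> sets Q" using BQ B'Q by auto
      have "Q.prob A \<le> Q.prob ?C + Q.prob ((A - ?C) \<union> (?C - A))"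
        using measure_sd_le[OF Q.finite_measure_axioms AQ CQ] .
      moreover have "Q.prob ?C \<le> Q.prob A + Q.prob ((A - ?C) \<union> (?C - A))"
        using measure_sd_le[OF Q.finite_measure_axioms CQ AQ] by (simp add: Un_commute)
      ultimately show ?thesis by linarith
    qed
    define a where "a = Q.prob A"
    define b where "b = Q.prob B"
    have ab: "0 \<le> a" "a \<le> 1" "0 \<le> b" "b \<le> 1" by (auto simp: a_def b_def)
    have "\<bar>a - b\<bar> < e" using d1 p0 by (simp add: a_def b_def)
    moreover have "\<bar>a - b * b\<bar> < 2 * e" using d2 p2 pBB by (simp add: a_def b_def)
    moreover have "\<bar>b * b - a * a\<bar> \<le> 2 * \<bar>a - b\<bar>"
    proof -
      have "\<bar>b * b - a * a\<bar> = \<bar>b - a\<bar> * (a + b)" proof -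
        have "b * b - a * a = (b - a) * (a + b)" by (simp add: algebra_simps)
        then show ?thesis using ab by (simp add: abs_mult)
      qed
      also have "\<dots> \<le> \<bar>b - a\<bar> * 2" using ab by (intro mult_left_mono) auto
      finally show ?thesis by (simp add: abs_minus_commute)
    qed
    ultimately have "\<bar>a - a * a\<bar> \<le> 4 * e" by (smt (verit))
    then show ?thesis by (simp add: a_def power2_eq_square)
  qed
  have "Q.prob A - Q.prob A ^ 2 = 0"
  proof (rule ccontr)
    assume ne: "Q.prob A - Q.prob A ^ 2 \<noteq> 0"
    define e where "e = \<bar>Q.prob A - Q.prob A ^ 2\<bar> / 8"
    have "e > 0" using ne by (simp add: e_def)
    from key[OF this] show False using ne by (simp add: e_def)
  qed
  then have "Q.prob A * (1 - Q.prob A) = 0" by (simp add: power2_eq_square algebra_simps)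
  then show ?thesis unfolding Q_def by auto
qed

lemma skewT_pow: "(skewT ^^ n) (\<xi>, \<zeta>) = ((\<lambda>k. \<xi> (k + n)), shift_zeta_pow (\<Sum>i<n. \<xi> i) \<zeta>)"
proof (induction n)
  case 0 then show ?case by (simp add: shift_zeta_pow_def)
next
  case (Suc n)
  then show ?case
    by (simp add: skewT_def shift_xi_def shift_zeta_pow_def fun_eq_iff ac_simps)
qed

lemma sum_swp: "(\<Sum>i<2*n. \<xi> (swp n i)) = (\<Sum>i<2*n. (\<xi> i :: int))"
proof (rule sum.reindex_bij_witness[where i="swp n" and j="swp n"])
qed (auto simp: swp_def)

theorem lemmaA2:
  fixes p :: "int pmf" and D :: "real measure" and A :: "((nat \<Rightarrow> int) \<times> (int \<Rightarrow> real)) set"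
  assumes sym: "\<And>k. pmf p k = pmf p (- k)"
    and mono: "\<And>k. k \<ge> 0 \<Longrightarrow> pmf p (k + 1) \<le> pmf p k"
    and var_fin: "(\<lambda>k. real_of_int k ^ 2 * pmf p k) summable_on UNIV"
    and var_pos: "(\<Sum>\<^sub>\<infinity>k. real_of_int k ^ 2 * pmf p k) > 0"
    and D_prob: "prob_space D"
    and D_sets: "sets D = sets (restrict_space borel {0<..})"
    and D_mean: "integrable D (\<lambda>x. x)"
    and A_meas: "A \<in> sets (PiM UNIV (\<lambda>_::nat. measure_pmf p) \<Otimes>\<^sub>M PiM UNIV (\<lambda>_::int. D))"
    and A_inv: "skewT -` A \<inter> space (PiM UNIV (\<lambda>_::nat. measure_pmf p) \<Otimes>\<^sub>M PiM UNIV (\<lambda>_::int. D)) = A"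
  shows "\<exists>C \<in> sets (PiM UNIV (\<lambda>_::int. D)).
           AE x in (PiM UNIV (\<lambda>_::nat. measure_pmf p) \<Otimes>\<^sub>M PiM UNIV (\<lambda>_::int. D)).
             (x \<in> A \<longleftrightarrow> snd x \<in> C)"
proof -
  define Q where "Q = PiM UNIV (\<lambda>_::nat. measure_pmf p)"
  define P where "P = PiM UNIV (\<lambda>_::int. D)"
  interpret Q: prob_space Q unfolding Q_def by (rule prob_space_PiM) (auto intro: prob_space_measure_pmf)
  interpret P: prob_space P unfolding P_def by (rule prob_space_PiM) (use D_prob in auto)
  interpret QP: pair_prob_space Q P by unfold_locales
  have AN: "A \<in> sets (Q \<Otimes>\<^sub>M P)" using A_meas by (simp add: Q_def P_def)
  have Asp: "A \<subseteq> space Q \<times> space P" using sets.sets_into_space[OF AN] by (simp add: space_pair_measure)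
  have spQ: "\<xi> \<in> space Q" for \<xi> by (simp add: Q_def space_PiM)
  have spT: "skewT x \<in> space Q \<times> space P" if "x \<in> space Q \<times> space P" for x
    using that by (auto simp: skewT_def spQ P_def space_PiM shift_zeta_pow_def PiE_iff)
  have inv1: "skewT x \<in> A \<longleftrightarrow> x \<in> A" if "x \<in> space Q \<times> space P" for x
  proof -
    have "x \<in> A \<longleftrightarrow> x \<in> skewT -` A \<inter> space (Q \<Otimes>\<^sub>M P)"
      using A_inv by (simp add: Q_def P_def)
    then show ?thesis using that by (simp add: space_pair_measure)
  qed
  have invn: "(skewT ^^ n) x \<in> space Q \<times> space P \<and> ((skewT ^^ n) x \<in> A \<longleftrightarrow> x \<in> A)"
    if "x \<in> space Q \<times> space P" for x n
  proof (induction n)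
    case 0 then show ?case using that by simp
  next
    case (Suc n) then show ?case using spT inv1 by simp
  qed
  define S where "S \<zeta> = (\<lambda>\<xi>. (\<xi>, \<zeta>)) -` A \<inter> space Q" for \<zeta>
  have SQ: "S \<zeta> \<in> sets Q" if "\<zeta> \<in> space P" for \<zeta>
    unfolding S_def using measurable_Pair2'[OF that] AN by (rule measurable_sets)
  have Seq: "(\<lambda>\<xi>. (\<xi>, \<zeta>)) -` A = S \<zeta>" for \<zeta>
    using spQ by (auto simp: S_def)
  have S01: "measure Q (S \<zeta>) = 0 \<or> measure Q (S \<zeta>) = 1" if z: "\<zeta> \<in> space P" for \<zeta>
    unfolding Q_def
  proof (rule hewitt_savage)
    show "S \<zeta> \<in> sets (PiM UNIV (\<lambda>_. measure_pmf p))" using SQ[OF z] by (simp add: Q_def)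
    fix n \<xi>
    have x1: "(\<xi>, \<zeta>) \<in> space Q \<times> space P" using z spQ by auto
    have x2: "(\<xi> \<circ> swp n, \<zeta>) \<in> space Q \<times> space P" using z spQ by auto
    have "(skewT ^^ (2*n)) (\<xi> \<circ> swp n, \<zeta>) = (skewT ^^ (2*n)) (\<xi>, \<zeta>)"
      unfolding skewT_pow using sum_swp[where n=n and \<xi>=\<xi>] by (simp add: swp_def o_def)
    then show "(\<xi> \<circ> swp n \<in> S \<zeta>) = (\<xi> \<in> S \<zeta>)"
      using invn[OF x1, of "2*n"] invn[OF x2, of "2*n"] spQ by (simp add: S_def)
  qed (rule prob_space_measure_pmf)
  define g where "g \<zeta> = emeasure Q ((\<lambda>\<xi>. (\<xi>, \<zeta>)) -` A)" for \<zeta>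
  have gm: "g \<in> borel_measurable P" unfolding g_def by (rule QP.measurable_emeasure_Pair2[OF AN])
  define C where "C = g -` {1} \<inter> space P"
  have CP: "C \<in> sets P" unfolding C_def using gm by (rule measurable_sets) simp
  define Bd where "Bd = (A - space Q \<times> C) \<union> (space Q \<times> C - A)"
  have BdN: "Bd \<in> sets (Q \<Otimes>\<^sub>M P)" unfolding Bd_def using AN CP by auto
  have sec0: "emeasure Q ((\<lambda>\<xi>. (\<xi>, \<zeta>)) -` Bd) = 0" if z: "\<zeta> \<in> space P" for \<zeta>
  proof (cases "\<zeta> \<in> C")
    case True
    then have g1: "emeasure Q (S \<zeta>) = 1" by (simp add: C_def g_def Seq)
    have "(\<lambda>\<xi>. (\<xi>, \<zeta>)) -` Bd = space Q - S \<zeta>"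
      using True spQ by (auto simp: Bd_def S_def)
    then show ?thesis using g1 SQ[OF z] by (simp add: emeasure_compl Q.emeasure_space_1)
  next
    case False
    then have "emeasure Q (S \<zeta>) \<noteq> 1" using z by (simp add: C_def g_def Seq)
    then have "measure Q (S \<zeta>) = 0" using S01[OF z] Q.emeasure_eq_measure by auto
    then have g0: "emeasure Q (S \<zeta>) = 0" using Q.emeasure_eq_measure by simp
    have "(\<lambda>\<xi>. (\<xi>, \<zeta>)) -` Bd = S \<zeta>"
      using False spQ by (auto simp: Bd_def S_def)
    then show ?thesis using g0 by simp
  qed
  have "emeasure (Q \<Otimes>\<^sub>M P) Bd = (\<integral>\<^sup>+\<zeta>. emeasure Q ((\<lambda>\<xi>. (\<xi>, \<zeta>)) -` Bd) \<partial>P)"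
    by (rule QP.emeasure_pair_measure_alt2[OF BdN])
  also have "\<dots> = (\<integral>\<^sup>+\<zeta>. 0 \<partial>P)" by (rule nn_integral_cong) (simp add: sec0)
  finally have "Bd \<in> null_sets (Q \<Otimes>\<^sub>M P)" using BdN by (simp add: null_sets_def)
  moreover have "{x \<in> space (Q \<Otimes>\<^sub>M P). \<not> (x \<in> A \<longleftrightarrow> snd x \<in> C)} \<subseteq> Bd"
    by (auto simp: Bd_def space_pair_measure)
  ultimately have "AE x in Q \<Otimes>\<^sub>M P. (x \<in> A \<longleftrightarrow> snd x \<in> C)" by (rule AE_I')
  then show ?thesis using CP unfolding Q_def P_def by blast
qed

end
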